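(* Let $\alpha\geq 0$ and $r_\alpha(x)=\|x\|_1-\alpha\|x\|_2$ on $\mathbb{R}^N$. Let $l:\mathbb{R}^N\to\mathbb{R}$ be differentiable with $L$-Lipschitz continuous gradient, for some $L>0$. Let $x^*$ be a global minimizer of $E(x)=r_\alpha(x)+l(x)$. Then: 1) For every $\lambda$ with $0<\lambda<1/L$, $$x^*\in\operatorname{argmin}_x\ \Big(r_\alpha(x)+\frac{1}{2\lambda}\big\|x-(x^*-\lambda\nabla l(x^* ))\big\|_2^2\Big).$$ 2) If $x^*=0$, then $\|\nabla l(0)\|_\infty\leq 1-\alpha$. Moreover, if $\alpha=1$ and $x^*=0$ then $\nabla l(0)=0$, and if $\alpha>1$ then $x^*\neq 0$. 3) If $\|x^*\|_2\geq\alpha/L$, let $\Lambda=\{i: x^*_i\neq 0\}$. Then $x^*_\Lambda$ is in the same direction as $\nabla_\Lambda l(x^* )+\operatorname{sign}(x^*_\Lambda)$, and $\|\nabla_\Lambda l(x^* )+\operatorname{sign}(x^*_\Lambda)\|_2=\alpha$. 4) If $0<\|x^*\|_2<\alpha/L$, then $x^*$ is 1-sparse (exactly one nonzero component). Moreover, $\nabla_i l(x^* )=(\alpha-1)\operatorname{sign}(x^*_i)$ for the index $i$ with $x^*_i\neq 0$, and $|\nabla_i l(x^* )|\leq\max\{0,\,1-\alpha+\|x^*\|_\infty L\}$ for every $i$ with $x^*_i=0$.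
   Context: For an index set $\Lambda$, $v_\Lambda$ denotes the subvector of $v$ with components in $\Lambda$ and $\nabla_\Lambda l$ the corresponding components of $\nabla l$; $\operatorname{sign}$ is applied componentwise. *)

theory Defs
  imports "HOL-Analysis.Analysis"
begin

definition norm1 :: "real^'n \<Rightarrow> real" where
  "norm1 x = (\<Sum>i\<in>UNIV. \<bar>x $ i\<bar>)"

definition norminf :: "real^'n \<Rightarrow> real" where
  "norminf x = Max (range (\<lambda>i. \<bar>x $ i\<bar>))"

definition r_alpha :: "real \<Rightarrow> real^'n \<Rightarrow> real" where
  "r_alpha \<alpha> x = norm1 x - \<alpha> * norm x"

end

theory Submission
  imports Defs
begin


lemma descent:
  fixes l :: "real^'n \<Rightarrow> real" and gl :: "real^'n \<Rightarrow> real^'n"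
  assumes grad: "\<And>x. (l has_derivative (\<lambda>h. gl x \<bullet> h)) (at x)"
    and lips: "L-lipschitz_on UNIV gl"
  shows "l (x + d) \<le> l x + gl x \<bullet> d + L/2 * (norm d)^2"
proof -
  define \<psi> where "\<psi> t = l (x + t *\<^sub>R d) - t * (gl x \<bullet> d) - L/2 * t^2 * (norm d)^2" for t
  have D: "(\<psi> has_real_derivative (gl (x + t *\<^sub>R d) \<bullet> d - gl x \<bullet> d - L * t * (norm d)^2)) (at t)" for t
  proof -
    have p: "((\<lambda>t. x + t *\<^sub>R d) has_derivative (\<lambda>h. h *\<^sub>R d)) (at t)"
      by (auto intro!: derivative_eq_intros)
    have "((\<lambda>t. l (x + t *\<^sub>R d)) has_derivative (\<lambda>h. gl (x + t *\<^sub>R d) \<bullet> (h *\<^sub>R d))) (at t)"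
      using has_derivative_compose[OF p grad] .
    then have "((\<lambda>t. l (x + t *\<^sub>R d)) has_real_derivative (gl (x + t *\<^sub>R d) \<bullet> d)) (at t)"
      unfolding has_field_derivative_def by (rule has_derivative_eq_rhs) (auto simp: fun_eq_iff)
    then show ?thesis unfolding \<psi>_def
      by (auto intro!: derivative_eq_intros)
  qed
  have le: "gl (x + t *\<^sub>R d) \<bullet> d - gl x \<bullet> d - L * t * (norm d)^2 \<le> 0" if "0 \<le> t" for t
  proof -
    have "gl (x + t *\<^sub>R d) \<bullet> d - gl x \<bullet> d = (gl (x + t *\<^sub>R d) - gl x) \<bullet> d"
      by (simp add: inner_diff_left)
    also have "\<dots> \<le> norm (gl (x + t *\<^sub>R d) - gl x) * norm d"
      by (rule norm_cauchy_schwarz)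
    also have "norm (gl (x + t *\<^sub>R d) - gl x) \<le> L * (t * norm d)"
      using lipschitz_onD[OF lips, of "x + t *\<^sub>R d" x] that by (simp add: dist_norm)
    then have "norm (gl (x + t *\<^sub>R d) - gl x) * norm d \<le> L * (t * norm d) * norm d"
      by (simp add: mult_right_mono)
    finally show ?thesis by (simp add: power2_eq_square algebra_simps)
  qed
  have "\<psi> 1 \<le> \<psi> 0"
  proof (rule DERIV_nonpos_imp_nonincreasing[of 0 1 \<psi>])
    fix t :: real assume "0 \<le> t" "t \<le> 1"
    then show "\<exists>y. (\<psi> has_real_derivative y) (at t) \<and> y \<le> 0"
      using D le by blast
  qed simp
  then show ?thesis by (simp add: \<psi>_def)
qed

lemma norm_sq_vec: "(norm (v::real^'n))^2 = (\<Sum>i\<in>UNIV. (v$i)^2)"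
  unfolding power2_norm_eq_inner inner_vec_def by (simp add: power2_eq_square)

lemma norm1_axis: "norm1 (axis k (t::real)) = \<bar>t\<bar>"
  unfolding norm1_def axis_def by (simp add: if_distrib cong: if_cong)

lemma norm_axis': "norm (axis k (t::real)) = \<bar>t\<bar>"
proof -
  have e: "(\<lambda>i. (axis k t $ i)^2) = (\<lambda>i. if i = k then t^2 else 0)" by (auto simp: axis_def)
  have "(norm (axis k t))^2 = t^2" unfolding norm_sq_vec e by simp
  then show ?thesis by (metis real_sqrt_abs real_sqrt_unique norm_ge_zero)
qed

lemma norm1_le:
  fixes x y :: "real^'n"
  assumes "\<And>k. \<bar>y$k\<bar> \<le> sgn (x$k) * y$k"
  shows "norm1 y - norm1 x \<le> (\<chi> k. sgn (x$k)) \<bullet> (y - x)"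
proof -
  have a: "\<bar>x$k\<bar> = sgn (x$k) * x$k" for k by (simp add: sgn_if)
  have "norm1 y \<le> (\<Sum>k\<in>UNIV. sgn (x$k) * y$k)" unfolding norm1_def by (rule sum_mono) (rule assms)
  moreover have "norm1 x = (\<Sum>k\<in>UNIV. sgn (x$k) * x$k)" unfolding norm1_def using a by simp
  moreover have "(\<chi> k. sgn (x$k)) \<bullet> (y - x) = (\<Sum>k\<in>UNIV. sgn (x$k) * y$k) - (\<Sum>k\<in>UNIV. sgn (x$k) * x$k)"
    by (simp add: inner_vec_def algebra_simps sum_subtractf)
  ultimately show ?thesis by linarith
qed

lemma quad_zero:
  fixes a c L :: real
  assumes "a > 0" "L > 0" "\<And>t. \<bar>t\<bar> \<le> a \<Longrightarrow> 0 \<le> t * c + L/2 * t^2"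
  shows "c = 0"
proof (rule ccontr)
  assume c: "c \<noteq> 0"
  define m where "m = min (1/L) (a/\<bar>c\<bar>)"
  have m: "m > 0" "m \<le> 1/L" "m * \<bar>c\<bar> \<le> a" using assms c
    by (auto simp: m_def min_def field_simps)
  have "\<bar>-c*m\<bar> \<le> a" using m by (simp add: abs_mult mult.commute)
  from assms(3)[OF this] have "0 \<le> - (c^2)*m + L/2*c^2*m^2" by (simp add: power2_eq_square algebra_simps)
  moreover have "L/2*c^2*m^2 < c^2*m"
  proof -
    have "L * m \<le> 1" using m assms by (simp add: field_simps)
    then have "L/2 * m < 1" by linarith
    then have "(L/2*m) * (c^2*m) < 1 * (c^2*m)" using c m by (intro mult_strict_right_mono) auto
    then show ?thesis by (simp add: power2_eq_square algebra_simps)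
  qed
  ultimately show False by linarith
qed

lemma quad_abs:
  fixes b c L :: real
  assumes "L > 0" "\<And>t. 0 \<le> \<bar>t\<bar> * b + t * c + L/2 * t^2"
  shows "\<bar>c\<bar> \<le> b"
proof (rule ccontr)
  assume h: "\<not> \<bar>c\<bar> \<le> b"
  define a where "a = b - \<bar>c\<bar>"
  have a: "a < 0" using h by (simp add: a_def)
  define m where "m = -a/L"
  define t where "t = (if c \<ge> 0 then -m else m)"
  have m: "m > 0" using a assms by (simp add: m_def field_simps)
  have "\<bar>t\<bar> * b + t * c = m * a" using m by (auto simp: t_def a_def algebra_simps)
  moreover have "t^2 = m^2" by (simp add: t_def)
  ultimately have "0 \<le> m * a + L/2 * m^2" using assms(2)[of t] by simp
  also have "m * a + L/2 * m^2 = -(a^2)/(2*L)" using assms by (simp add: m_def power2_eq_square field_simps)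
  also have "\<dots> < 0" using a assms by simp
  finally show False by simp
qed


context
  fixes \<alpha> L :: real
    and l :: "real^'n \<Rightarrow> real"
    and gl :: "real^'n \<Rightarrow> real^'n"
    and xs :: "real^'n"
  assumes alpha: "\<alpha> \<ge> 0"
    and Lpos: "L > 0"
    and grad: "\<And>x. (l has_derivative (\<lambda>h. gl x \<bullet> h)) (at x)"
    and lips: "L-lipschitz_on UNIV gl"
    and minim: "\<And>x. r_alpha \<alpha> xs + l xs \<le> r_alpha \<alpha> x + l x"
begin

lemma key: "r_alpha \<alpha> xs \<le> r_alpha \<alpha> y + gl xs \<bullet> (y - xs) + L/2 * (norm (y - xs))^2"
  using descent[OF grad lips, of xs "y - xs"] minim[of y] by simp

lemma key2:
  assumes "\<And>k. \<bar>y$k\<bar> \<le> sgn (xs$k) * y$k"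
  shows "0 \<le> ((\<chi> k. sgn (xs$k)) + gl xs) \<bullet> (y - xs) - \<alpha> * (norm y - norm xs) + L/2 * (norm (y - xs))^2"
  using key[of y] norm1_le[of y xs, OF assms] unfolding r_alpha_def
  by (simp add: inner_add_left algebra_simps)

lemma FO:
  assumes xs0: "xs \<noteq> 0" and k: "xs$k \<noteq> 0"
  shows "gl xs $ k + sgn (xs$k) = \<alpha> / norm xs * xs$k"
proof -
  define R where "R = norm xs"
  have R: "R > 0" using xs0 by (simp add: R_def)
  define c where "c = sgn (xs$k) + gl xs $ k - \<alpha> * xs$k / R"
  have "c = 0"
  proof (rule quad_zero[of "\<bar>xs$k\<bar>" L])
    show "0 < \<bar>xs$k\<bar>" using k by simp
    show "0 < L" by (rule Lpos)
    fix t :: real assume t: "\<bar>t\<bar> \<le> \<bar>xs$k\<bar>"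
    define y where "y = xs + t *\<^sub>R axis k 1"
    have yi: "y $ i = (if i = k then xs$i + t else xs$i)" for i
      by (simp add: y_def axis_def)
    have cond: "\<bar>y$i\<bar> \<le> sgn (xs$i) * y$i" for i
    proof (cases "i = k")
      case True
      then show ?thesis using t k by (cases "xs$k > 0") (auto simp: yi sgn_if abs_if)
    next
      case False
      then show ?thesis by (simp add: yi sgn_if)
    qed
    have e1: "((\<chi> k. sgn (xs$k)) + gl xs) \<bullet> (y - xs) = t * (sgn (xs$k) + gl xs $ k)"
      by (simp add: y_def inner_axis)
    have e2: "(norm (y - xs))^2 = t^2" by (simp add: y_def)
    have "xs \<bullet> y = R^2 + t * xs$k"
      by (simp add: y_def inner_add_right inner_axis R_def power2_norm_eq_inner)
    then have "R^2 + t * xs$k \<le> R * norm y" using norm_cauchy_schwarz[of xs y] by (simp add: R_def)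
    then have ny: "R + t * xs$k / R \<le> norm y" using R
      by (simp add: field_simps power2_eq_square)
    have "\<alpha> * (R + t * xs$k / R) \<le> \<alpha> * norm y" using ny alpha by (rule mult_left_mono)
    with key2[OF cond] e1 e2 show "0 \<le> t * c + L/2 * t^2"
      by (simp add: c_def R_def algebra_simps)
  qed
  then show ?thesis by (simp add: c_def R_def)
qed


lemma part2:
  assumes xs0: "xs = 0"
  shows "\<bar>gl 0 $ i\<bar> \<le> 1 - \<alpha>"
proof (rule quad_abs[OF Lpos])
  fix t :: real
  have n0: "norm1 (0::real^'n) = 0" by (simp add: norm1_def)
  from key[of "axis i t"] xs0 show "0 \<le> \<bar>t\<bar> * (1 - \<alpha>) + t * gl 0 $ i + L / 2 * t\<^sup>2"
    by (simp add: r_alpha_def n0 norm1_axis norm_axis' inner_axis algebra_simps)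
qed

lemma sparse:
  assumes R0: "0 < norm xs" and RL: "norm xs < \<alpha> / L" and ai: "xs$i \<noteq> 0" and bj: "xs$j \<noteq> 0"
  shows "i = j"
proof (rule ccontr)
  assume ij: "i \<noteq> j"
  define R where "R = norm xs"
  define a where "a = xs$i"
  define b where "b = xs$j"
  have R: "R > 0" "R * L < \<alpha>" using R0 RL Lpos by (auto simp: R_def field_simps)
  have ap: "\<alpha> > 0" using R Lpos by (smt (verit) mult_pos_pos)
  define D where "D = a^2 + b^2"
  have Dp: "D > 0" using ai by (simp add: D_def a_def add_pos_nonneg)
  define B where "B = 4*\<alpha>*(\<alpha> - R*L)/L^2"
  have Bp: "B > 0" using R ap Lpos by (simp add: B_def)
  define d where "d = axis i b - axis j a"
  define c where "c = ((\<chi> k. sgn (xs$k)) + gl xs) \<bullet> d"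
  define m where "m = min (min (\<bar>a\<bar>/\<bar>b\<bar>) (\<bar>b\<bar>/\<bar>a\<bar>)) (min 1 (B/(2*D)))"
  define t where "t = (if c \<ge> 0 then -m else m)"
  define y where "y = xs + t *\<^sub>R d"
  have mp: "m > 0" using ai bj Bp Dp by (simp add: m_def a_def b_def)
  have "m \<le> \<bar>a\<bar>/\<bar>b\<bar>" unfolding m_def by linarith
  then have mb: "m * \<bar>b\<bar> \<le> \<bar>a\<bar>" using bj
    by (simp add: b_def pos_le_divide_eq)
  have "m \<le> \<bar>b\<bar>/\<bar>a\<bar>" unfolding m_def by linarith
  then have ma: "m * \<bar>a\<bar> \<le> \<bar>b\<bar>" using ai
    by (simp add: a_def pos_le_divide_eq)
  have m1: "m \<le> 1" unfolding m_def by linarith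
  have "m \<le> B/(2*D)" unfolding m_def by linarith
  then have mB: "m * D \<le> B/2" using Dp by (simp add: pos_le_divide_eq)
  define \<tau> where "\<tau> = m^2 * D"
  have tau: "\<tau> > 0" "\<tau> < B"
  proof -
    show "\<tau> > 0" using mp Dp by (simp add: \<tau>_def)
    have "m^2 * D \<le> m * D" using mp m1 Dp by (simp add: power2_eq_square mult_right_le_one_le)
    then show "\<tau> < B" using mB Bp by (simp add: \<tau>_def)
  qed
  have tc: "t * c \<le> 0" using mp
    by (cases "c \<ge> 0") (auto simp: t_def mult_le_0_iff)
  have t2: "t^2 = m^2" by (simp add: t_def)
  have tabs: "\<bar>t\<bar> = m" using mp by (simp add: t_def)
  have yk: "y $ k = (if k = i then a + t*b else if k = j then b - t*a else xs$k)" for k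
    using ij by (simp add: y_def d_def axis_def a_def b_def)
  have cond: "\<bar>y$k\<bar> \<le> sgn (xs$k) * y$k" for k
  proof -
    have "\<bar>t*b\<bar> \<le> \<bar>a\<bar>" using mb tabs by (simp add: abs_mult)
    moreover have "\<bar>t*a\<bar> \<le> \<bar>b\<bar>" using ma tabs by (simp add: abs_mult)
    moreover have h: "\<bar>u\<bar> \<le> \<bar>v\<bar> \<Longrightarrow> \<bar>v + u\<bar> \<le> sgn v * (v + u)" for u v :: real
      by (cases "v > 0"; cases "v < 0") (auto simp: sgn_if abs_if)
    ultimately show ?thesis
      using h[of "t*b" a] h[of "- (t*a)" b] ij
      by (auto simp: yk a_def[symmetric] b_def[symmetric] sgn_if)
  qed
  have dd: "d \<bullet> d = D" using ij
    by (simp add: d_def D_def inner_diff_left inner_diff_right inner_axis_axis power2_eq_square)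
  have xd: "xs \<bullet> d = 0"
    by (simp add: d_def inner_diff_right inner_axis a_def b_def)
  have e1: "((\<chi> k. sgn (xs$k)) + gl xs) \<bullet> (y - xs) = t * c"
    by (simp add: y_def c_def)
  have e2: "(norm (y - xs))^2 = \<tau>"
  proof -
    have nd: "(norm d)^2 = D" using dd by (simp add: power2_norm_eq_inner)
    show ?thesis by (simp add: y_def power_mult_distrib nd t2 \<tau>_def)
  qed
  have "(norm y)^2 = y \<bullet> y" by (simp add: power2_norm_eq_inner)
  also have "\<dots> = xs \<bullet> xs + 2*t*(xs \<bullet> d) + t^2*(d \<bullet> d)"
    by (simp add: y_def inner_add_left inner_add_right inner_commute[of d xs] power2_eq_square algebra_simps)
  also have "\<dots> = R^2 + \<tau>" by (simp add: xd dd t2 \<tau>_def R_def power2_norm_eq_inner)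
  finally have "(norm y)^2 = R^2 + \<tau>" .
  then have ny: "norm y = sqrt (R^2 + \<tau>)" by (metis norm_ge_zero real_sqrt_unique)
  have sq: "(R + L*\<tau>/(2*\<alpha>))^2 < R^2 + \<tau>"
  proof -
    have h: "L^2 * \<tau> < 4*\<alpha>*(\<alpha> - R*L)" using tau Lpos by (simp add: B_def field_simps)
    define q where "q = (4*\<alpha>*R*L + L^2*\<tau>)/(4*\<alpha>^2)"
    have "(R + L*\<tau>/(2*\<alpha>))^2 = R^2 + \<tau> * q"
      using ap by (simp add: q_def power2_eq_square field_simps)
    moreover have "q < 1" using h ap
      by (simp add: q_def field_simps power2_eq_square)
    then have "\<tau> * q < \<tau> * 1" using tau(1) by (intro mult_strict_left_mono)
    ultimately show ?thesis by simp
  qed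
  have "R + L*\<tau>/(2*\<alpha>) < norm y" unfolding ny by (rule real_less_rsqrt[OF sq])
  then have "\<alpha> * (R + L*\<tau>/(2*\<alpha>)) < \<alpha> * norm y" using ap by simp
  moreover have "\<alpha> * (R + L*\<tau>/(2*\<alpha>)) = \<alpha> * R + L*\<tau>/2" using ap by (simp add: field_simps)
  ultimately have "\<alpha> * R + L*\<tau>/2 < \<alpha> * norm y" by linarith
  with key2[OF cond] e1 e2 tc show False by (simp add: R_def algebra_simps)
qed


lemma part4:
  assumes R0: "0 < norm xs" and RL: "norm xs < \<alpha> / L"
  shows "card {i. xs $ i \<noteq> 0} = 1
        \<and> (\<forall>i. xs $ i \<noteq> 0 \<longrightarrow> gl xs $ i = (\<alpha> - 1) * sgn (xs $ i))
        \<and> (\<forall>i. xs $ i = 0 \<longrightarrow> \<bar>gl xs $ i\<bar> \<le> max 0 (1 - \<alpha> + norminf xs * L))"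
proof -
  have xs0: "xs \<noteq> 0" using R0 by auto
  then obtain k where k: "xs$k \<noteq> 0" by (auto simp: vec_eq_iff)
  have only: "xs$i \<noteq> 0 \<Longrightarrow> i = k" for i using sparse[OF R0 RL _ k] by blast
  have only': "i \<noteq> k \<Longrightarrow> xs$i = 0" for i using only by blast
  have Lam: "{i. xs $ i \<noteq> 0} = {k}" using k only' by auto
  have xsax: "xs = axis k (xs$k)" by (auto simp: vec_eq_iff axis_def only')
  define R where "R = norm xs"
  have Rk: "R = \<bar>xs$k\<bar>" unfolding R_def by (subst xsax) (simp add: norm_axis')
  have R: "R > 0" using R0 by (simp add: R_def)
  have sg: "xs$k / R = sgn (xs$k)" using k Rk by (simp add: sgn_if)
  have "gl xs $ k + sgn (xs$k) = \<alpha> * (xs$k / R)" using FO[OF xs0 k] by (simp add: R_def)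
  then have "gl xs $ k + sgn (xs$k) = \<alpha> * sgn (xs$k)" by (simp only: sg)
  then have gk: "gl xs $ k = (\<alpha> - 1) * sgn (xs$k)" by (simp add: left_diff_distrib)
  have part_c: "\<bar>gl xs $ j\<bar> \<le> max 0 (1 - \<alpha> + norminf xs * L)" if j: "xs$j = 0" for j
  proof -
    have jk: "j \<noteq> k" using j k by auto
    define g where "g = gl xs"
    define s where "s = (if g$j \<ge> 0 then -R else R)"
    define y where "y = axis j s"
    have as: "\<bar>s\<bar> = R" using R by (simp add: s_def)
    have rxs: "r_alpha \<alpha> xs = R - \<alpha> * R"
      unfolding r_alpha_def by (subst (1 2) xsax) (simp add: norm1_axis norm_axis' Rk)
    have ry: "r_alpha \<alpha> y = R - \<alpha> * R"
      unfolding r_alpha_def y_def by (simp add: norm1_axis norm_axis' as)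
    have gs: "g$j * s = - \<bar>g$j\<bar> * R" by (simp add: s_def)
    have gx: "g$k * xs$k = (\<alpha> - 1) * R"
      using gk Rk k by (simp add: g_def sgn_if)
    have yx: "y - xs = axis j s - axis k (xs$k)"
      unfolding y_def by (subst xsax[symmetric]) (rule refl)
    have e1: "g \<bullet> (y - xs) = - \<bar>g$j\<bar> * R - (\<alpha> - 1) * R"
      unfolding yx by (simp add: inner_diff_right inner_axis gs gx[symmetric])
    have e2: "(norm (y - xs))^2 = 2 * R^2"
    proof -
      have "(norm (y - xs))^2 = (axis j s - axis k (xs$k)) \<bullet> (axis j s - axis k (xs$k))"
        unfolding yx power2_norm_eq_inner ..
      also have "\<dots> = s^2 + (xs$k)^2" using jk
        by (simp add: inner_diff_left inner_diff_right inner_axis_axis power2_eq_square)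
      moreover have "s^2 = R^2" using as by (metis power2_abs)
      moreover have "(xs$k)^2 = R^2" using Rk by simp
      ultimately show ?thesis by simp
    qed
    have "0 \<le> - \<bar>g$j\<bar> * R - (\<alpha> - 1) * R + L * R^2"
      using key[of y] rxs ry e1 e2 by (simp add: g_def)
    then have "\<bar>g$j\<bar> * R \<le> (1 - \<alpha> + L * R) * R" by (simp add: power2_eq_square algebra_simps)
    then have h: "\<bar>g$j\<bar> \<le> 1 - \<alpha> + L * R" using R by simp
    have "R \<le> norminf xs" unfolding norminf_def Rk by (rule Max_ge) auto
    then have "L * R \<le> norminf xs * L" using Lpos by (simp add: mult.commute)
    with h show ?thesis by (simp add: g_def)
  qed
  show ?thesis
  proof (intro conjI allI impI)
    show "card {i. xs $ i \<noteq> 0} = 1" using Lam by simp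
  next
    fix i assume "xs$i \<noteq> 0"
    then have "i = k" by (rule only)
    then show "gl xs $ i = (\<alpha> - 1) * sgn (xs $ i)" using gk by simp
  next
    fix i assume "xs $ i = 0"
    then show "\<bar>gl xs $ i\<bar> \<le> max 0 (1 - \<alpha> + norminf xs * L)" by (rule part_c)
  qed
qed

end


theorem lemma3:
  fixes \<alpha> L :: real
    and l :: "real^'n \<Rightarrow> real"
    and gl :: "real^'n \<Rightarrow> real^'n"
    and xs :: "real^'n"
  assumes alpha: "\<alpha> \<ge> 0"
    and Lpos: "L > 0"
    and grad: "\<And>x. (l has_derivative (\<lambda>h. gl x \<bullet> h)) (at x)"
    and lips: "L-lipschitz_on UNIV gl"
    and minim: "\<And>x. r_alpha \<alpha> xs + l xs \<le> r_alpha \<alpha> x + l x"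
  shows
    "(\<forall>s::real. 0 < s \<and> s < 1 / L \<longrightarrow>
        (\<forall>x. r_alpha \<alpha> xs + 1 / (2 * s) * (norm (xs - (xs - s *\<^sub>R gl xs)))\<^sup>2
             \<le> r_alpha \<alpha> x + 1 / (2 * s) * (norm (x - (xs - s *\<^sub>R gl xs)))\<^sup>2))
   \<and> (xs = 0 \<longrightarrow> norminf (gl 0) \<le> 1 - \<alpha>)
   \<and> (\<alpha> = 1 \<and> xs = 0 \<longrightarrow> gl 0 = 0)
   \<and> (\<alpha> > 1 \<longrightarrow> xs \<noteq> 0)
   \<and> (norm xs \<ge> \<alpha> / L \<longrightarrow>
        (let \<Lambda> = {i. xs $ i \<noteq> 0} in
          (\<exists>c\<ge>0. \<forall>i\<in>\<Lambda>. gl xs $ i + sgn (xs $ i) = c * xs $ i)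
          \<and> L2_set (\<lambda>i. gl xs $ i + sgn (xs $ i)) \<Lambda> = \<alpha>))
   \<and> (0 < norm xs \<and> norm xs < \<alpha> / L \<longrightarrow>
        card {i. xs $ i \<noteq> 0} = 1
        \<and> (\<forall>i. xs $ i \<noteq> 0 \<longrightarrow> gl xs $ i = (\<alpha> - 1) * sgn (xs $ i))
        \<and> (\<forall>i. xs $ i = 0 \<longrightarrow> \<bar>gl xs $ i\<bar> \<le> max 0 (1 - \<alpha> + norminf xs * L)))"
  proof -
  note K = key[OF alpha Lpos grad lips minim]
  note P2 = part2[OF alpha Lpos grad lips minim]
  have P1: "\<forall>s::real. 0 < s \<and> s < 1 / L \<longrightarrow>
        (\<forall>x. r_alpha \<alpha> xs + 1 / (2 * s) * (norm (xs - (xs - s *\<^sub>R gl xs)))\<^sup>2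
             \<le> r_alpha \<alpha> x + 1 / (2 * s) * (norm (x - (xs - s *\<^sub>R gl xs)))\<^sup>2)"
  proof (intro allI impI)
    fix s :: real and x assume s: "0 < s \<and> s < 1 / L"
    define g where "g = gl xs"
    have k: "r_alpha \<alpha> xs \<le> r_alpha \<alpha> x + g \<bullet> (x - xs) + L/2 * (norm (x - xs))^2"
      using K by (simp add: g_def)
    have "L/2 \<le> 1/(2 * s)" using s Lpos by (simp add: field_simps)
    then have m: "L/2 * (norm (x-xs))^2 \<le> 1/(2 * s) * (norm (x-xs))^2" by (rule mult_right_mono) simp
    define v where "v = x - xs"
    have E1: "x - (xs - s *\<^sub>R g) = v + s *\<^sub>R g" by (simp add: v_def)
    have E2: "(norm (v + s *\<^sub>R g))^2 = (norm v)^2 + 2 * s*(g \<bullet> v) + s^2 * (norm g)^2"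
      unfolding power2_norm_eq_inner
      by (simp add: inner_add_left inner_add_right inner_commute[of v g] power2_eq_square algebra_simps)
    have e: "(norm (x - (xs - s *\<^sub>R g)))^2 = (norm (x - xs))^2 + 2 * s*(g \<bullet> (x-xs)) + s^2 * (norm g)^2"
      unfolding E1 E2 by (simp add: v_def)
    have e0: "(norm (xs - (xs - s *\<^sub>R g)))^2 = s^2 * (norm g)^2"
      by (simp add: power_mult_distrib)
    have f: "1/(2 * s) * (norm (x - (xs - s *\<^sub>R g)))^2 = 1/(2 * s)*(norm (x-xs))^2 + g \<bullet> (x-xs) + s/2*(norm g)^2"
      using s unfolding e by (simp add: field_simps power2_eq_square)
    have f0: "1/(2 * s) * (norm (xs - (xs - s *\<^sub>R g)))^2 = s/2*(norm g)^2"
      using s unfolding e0 by (simp add: field_simps power2_eq_square)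
    show "r_alpha \<alpha> xs + 1 / (2 * s) * (norm (xs - (xs - s *\<^sub>R gl xs)))\<^sup>2
             \<le> r_alpha \<alpha> x + 1 / (2 * s) * (norm (x - (xs - s *\<^sub>R gl xs)))\<^sup>2"
      using k m f f0 by (simp add: g_def)
  qed
  have P2a: "xs = 0 \<longrightarrow> norminf (gl 0) \<le> 1 - \<alpha>"
  proof
    assume "xs = 0"
    then show "norminf (gl 0) \<le> 1 - \<alpha>" unfolding norminf_def
      by (intro Max.boundedI) (auto intro: P2)
  qed
  have P2b: "\<alpha> = 1 \<and> xs = 0 \<longrightarrow> gl 0 = 0"
  proof
    assume h: "\<alpha> = 1 \<and> xs = 0"
    show "gl 0 = 0" unfolding vec_eq_iff using P2 h by force
  qed
  have P2c: "\<alpha> > 1 \<longrightarrow> xs \<noteq> 0"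
  proof
    assume "\<alpha> > 1"
    show "xs \<noteq> 0"
    proof
      assume "xs = 0"
      from P2[OF this, of undefined] \<open>\<alpha> > 1\<close> show False by linarith
    qed
  qed
  have P3: "norm xs \<ge> \<alpha> / L \<longrightarrow>
        (let \<Lambda> = {i. xs $ i \<noteq> 0} in
          (\<exists>c\<ge>0. \<forall>i\<in>\<Lambda>. gl xs $ i + sgn (xs $ i) = c * xs $ i)
          \<and> L2_set (\<lambda>i. gl xs $ i + sgn (xs $ i)) \<Lambda> = \<alpha>)"
  proof
    assume nx: "norm xs \<ge> \<alpha> / L"
    show "let \<Lambda> = {i. xs $ i \<noteq> 0} in
          (\<exists>c\<ge>0. \<forall>i\<in>\<Lambda>. gl xs $ i + sgn (xs $ i) = c * xs $ i)
          \<and> L2_set (\<lambda>i. gl xs $ i + sgn (xs $ i)) \<Lambda> = \<alpha>"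
    proof (cases "xs = 0")
      case True
      then have "\<alpha> / L \<le> 0" using nx by simp
      then have "\<alpha> = 0" using alpha Lpos by (simp add: divide_le_0_iff)
      then show ?thesis using True by (auto simp: Let_def)
    next
      case False
      define R where "R = norm xs"
      have R: "R > 0" using False by (simp add: R_def)
      define \<Lambda> where "\<Lambda> = {i. xs $ i \<noteq> 0}"
      have fo: "\<forall>i\<in>\<Lambda>. gl xs $ i + sgn (xs $ i) = \<alpha> / R * xs $ i"
        using FO[OF alpha Lpos grad lips minim False] by (simp add: \<Lambda>_def R_def)
      have "L2_set (\<lambda>i. gl xs $ i + sgn (xs $ i)) \<Lambda> = L2_set (\<lambda>i. \<alpha> / R * xs $ i) \<Lambda>"
        using fo by (intro L2_set_cong) auto
      also have "\<dots> = \<alpha> / R * L2_set (\<lambda>i. xs $ i) \<Lambda>"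
        using alpha R by (intro L2_set_right_distrib[symmetric]) simp
      also have "L2_set (\<lambda>i. xs $ i) \<Lambda> = R"
      proof -
        have "(\<Sum>i\<in>\<Lambda>. (xs$i)^2) = (\<Sum>i\<in>UNIV. (xs$i)^2)"
          by (rule sum.mono_neutral_left) (auto simp: \<Lambda>_def)
        also have "\<dots> = R^2" by (simp add: R_def norm_sq_vec)
        finally show ?thesis unfolding L2_set_def using R by simp
      qed
      finally have "L2_set (\<lambda>i. gl xs $ i + sgn (xs $ i)) \<Lambda> = \<alpha>" using R by simp
      moreover have "\<alpha> / R \<ge> 0" using alpha R by simp
      ultimately show ?thesis using fo unfolding Let_def \<Lambda>_def[symmetric] by blast
    qed
  qed
  have P4: "0 < norm xs \<and> norm xs < \<alpha> / L \<longrightarrow>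
        card {i. xs $ i \<noteq> 0} = 1
        \<and> (\<forall>i. xs $ i \<noteq> 0 \<longrightarrow> gl xs $ i = (\<alpha> - 1) * sgn (xs $ i))
        \<and> (\<forall>i. xs $ i = 0 \<longrightarrow> \<bar>gl xs $ i\<bar> \<le> max 0 (1 - \<alpha> + norminf xs * L))"
    using part4[OF alpha Lpos grad lips minim] by blast
  show ?thesis using P1 P2a P2b P2c P3 P4 by blast
qed

end
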